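(* Let $(K,\mathrm{val})$ be a valued field in which every strict unit admits a square root in $K$. Then $(K,\mathrm{val})$ admits a pseudo-angular component map $\mathrm{p.an}:K^\times\to F^\times$.
   Context: Let $(G,\le)$ be a totally ordered abelian group written multiplicatively with identity $e$, and $G^2=\{g^2: g\in G\}$. Let $(K,\mathrm{val})$ be a valued field with surjective valuation $\mathrm{val}:K\to G\cup\{\infty\}$, valuation ring $B=\{x\in K:\mathrm{val}(x)\ge e\}$ (so $B^\times=\{x:\mathrm{val}(x)=e\}$), residue map $\pi:B\to F$ and residue field $F$. A strict unit is an element $x\in B^\times$ with $\pi(x)=1$. For $g\in G$, $\overline g$ denotes its class in $G/G^2$. A pseudo-angular component map is a map $\mathrm{p.an}:K^\times\to F^\times$ such that: (1) $\mathrm{p.an}(u)=\pi(u)$ for all $u\in B^\times$; (2) $\mathrm{p.an}(ux)=\pi(u)\mathrm{p.an}(x)$ for all $u\in B^\times$, $x\in K^\times$; (3) for every $g\in G$ and $c\in F^\times$ there is $w\in K$ with $\mathrm{val}(w)=g$ and $\mathrm{p.an}(w)=c$; (4) for nonzero $x_1,x_2\in K$ with $x_1+x_2\ne0$: if $\mathrm{val}(x_1)<\mathrm{val}(x_2)$ then $\mathrm{p.an}(x_1+x_2)=\mathrm{p.an}(x_1)$; if $\mathrm{val}(x_1)=\mathrm{val}(x_2)$ and $\mathrm{p.an}(x_1)+\mathrm{p.an}(x_2)\neq0$ then $\mathrm{val}(x_1+x_2)=\mathrm{val}(x_1)$ and $\mathrm{p.an}(x_1+x_2)=\mathrm{p.an}(x_1)+\mathrm{p.an}(x_2)$;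 (5) for $x,y\in K^\times$ with $\overline{\mathrm{val}(x)}=\overline{\mathrm{val}(y)}$ and $\mathrm{p.an}(x)=\mathrm{p.an}(y)$ there is $u\in K^\times$ with $y=u^2x$; (6) for all $a,u\in K^\times$ there is $k\in F^\times$ with $\mathrm{p.an}(au^2)=\mathrm{p.an}(a)k^2$. *)

theory Defs
  imports Main
begin

text \<open>The value group G is written additively (class linordered_ab_group_add);
  the valuation is only meaningful on nonzero elements (val 0 = infinity is
  encoded by treating 0 separately).\<close>

definition valuation :: "('k::field \<Rightarrow> 'g::linordered_ab_group_add) \<Rightarrow> bool" where
  "valuation val \<longleftrightarrow>
     (\<forall>x y. x \<noteq> 0 \<and> y \<noteq> 0 \<longrightarrow> val (x * y) = val x + val y) \<and>
     (\<forall>x y. x \<noteq> 0 \<and> y \<noteq> 0 \<and> x + y \<noteq> 0 \<longrightarrow> min (val x) (val y) \<le> val (x + y)) \<and>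
     (\<forall>g. \<exists>x. x \<noteq> 0 \<and> val x = g)"

definition val_ring :: "('k::field \<Rightarrow> 'g::linordered_ab_group_add) \<Rightarrow> 'k set" where
  "val_ring val = {x. x = 0 \<or> 0 \<le> val x}"

definition val_unit :: "('k::field \<Rightarrow> 'g::linordered_ab_group_add) \<Rightarrow> 'k \<Rightarrow> bool" where
  "val_unit val u \<longleftrightarrow> u \<noteq> 0 \<and> val u = 0"

definition residue_map ::
  "('k::field \<Rightarrow> 'g::linordered_ab_group_add) \<Rightarrow> ('k \<Rightarrow> 'f::field) \<Rightarrow> bool" where
  "residue_map val pi \<longleftrightarrow>
     (\<forall>x\<in>val_ring val. \<forall>y\<in>val_ring val. pi (x + y) = pi x + pi y \<and> pi (x * y) = pi x * pi y) \<and>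
     pi 1 = 1 \<and>
     pi ` val_ring val = UNIV \<and>
     (\<forall>x\<in>val_ring val. pi x = 0 \<longleftrightarrow> (x = 0 \<or> 0 < val x))"

definition valued_field ::
  "('k::field \<Rightarrow> 'g::linordered_ab_group_add) \<Rightarrow> ('k \<Rightarrow> 'f::field) \<Rightarrow> bool" where
  "valued_field val pi \<longleftrightarrow> valuation val \<and> residue_map val pi"

definition strict_unit ::
  "('k::field \<Rightarrow> 'g::linordered_ab_group_add) \<Rightarrow> ('k \<Rightarrow> 'f::field) \<Rightarrow> 'k \<Rightarrow> bool" where
  "strict_unit val pi u \<longleftrightarrow> val_unit val u \<and> pi u = 1"

definition pseudo_angular_component ::
  "('k::field \<Rightarrow> 'g::linordered_ab_group_add) \<Rightarrow> ('k \<Rightarrow> 'f::field) \<Rightarrow> ('k \<Rightarrow> 'f) \<Rightarrow> bool" where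
  "pseudo_angular_component val pi p \<longleftrightarrow>
     (\<forall>x. x \<noteq> 0 \<longrightarrow> p x \<noteq> 0) \<and>
     (\<forall>u. val_unit val u \<longrightarrow> p u = pi u) \<and>
     (\<forall>u x. val_unit val u \<and> x \<noteq> 0 \<longrightarrow> p (u * x) = pi u * p x) \<and>
     (\<forall>g c. c \<noteq> 0 \<longrightarrow> (\<exists>w. w \<noteq> 0 \<and> val w = g \<and> p w = c)) \<and>
     (\<forall>x1 x2. x1 \<noteq> 0 \<and> x2 \<noteq> 0 \<and> x1 + x2 \<noteq> 0 \<longrightarrow>
        (val x1 < val x2 \<longrightarrow> p (x1 + x2) = p x1) \<and>
        (val x1 = val x2 \<and> p x1 + p x2 \<noteq> 0 \<longrightarrow>
           val (x1 + x2) = val x1 \<and> p (x1 + x2) = p x1 + p x2)) \<and>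
     (\<forall>x y. x \<noteq> 0 \<and> y \<noteq> 0 \<and> (\<exists>g. val x - val y = g + g) \<and> p x = p y \<longrightarrow>
        (\<exists>u. u \<noteq> 0 \<and> y = u\<^sup>2 * x)) \<and>
     (\<forall>a u. a \<noteq> 0 \<and> u \<noteq> 0 \<longrightarrow> (\<exists>k. k \<noteq> 0 \<and> p (a * u\<^sup>2) = p a * k\<^sup>2))"

end

theory Submission
  imports Defs
begin

lemma double_inj:
  fixes c d :: "'g::linordered_ab_group_add"
  assumes "c + c = d + d" shows "c = d"
proof (rule ccontr)
  assume "c \<noteq> d"
  then consider "c < d" | "d < c" by (meson linorder_neqE)
  then show False
  proof cases
    case 1 then have "c + c < d + d" using add_strict_mono by blast
    with assms show False by simp
  next
    case 2 then have "d + d < c + c" using add_strict_mono by blast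
    with assms show False by simp
  qed
qed

definition grep :: "'g::linordered_ab_group_add \<Rightarrow> 'g" where
  "grep g = (if \<exists>c. g = c + c then 0 else SOME h. \<exists>c. g - h = c + c)"

definition ghalf :: "'g::linordered_ab_group_add \<Rightarrow> 'g" where
  "ghalf g = (THE c. g - grep g = c + c)"

lemma grep_ex: "\<exists>c. g - grep g = c + c"
proof (cases "\<exists>c. g = c + c")
  case True then show ?thesis by (simp add: grep_def)
next
  case False
  have "\<exists>h. \<exists>c. g - h = c + c" by (rule exI[of _ g]) (rule exI[of _ 0], simp)
  then have "\<exists>c. g - (SOME h. \<exists>c. g - h = c + c) = c + c" by (rule someI_ex)
  with False show ?thesis by (simp add: grep_def)
qed

lemma half_eq: "g - grep g = ghalf g + ghalf g"
proof -
  obtain c where c: "g - grep g = c + c" using grep_ex by blast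
  have "(THE c. g - grep g = c + c) = c"
    by (rule the_equality) (use c double_inj in auto)
  with c show ?thesis by (simp add: ghalf_def)
qed

lemma half_unique: "g - grep g = c + c \<Longrightarrow> ghalf g = c"
  using half_eq[of g] double_inj by metis

lemma grep_cong:
  fixes a b :: "'g::linordered_ab_group_add"
  assumes "a - b = d + d" shows "grep a = grep b"
proof -
  have 1: "(\<exists>c. a = c + c) \<longleftrightarrow> (\<exists>c. b = c + c)"
  proof
    assume "\<exists>c. a = c + c" then obtain c where "a = c + c" by blast
    with assms have "b = (c - d) + (c - d)" by (simp add: algebra_simps)
    then show "\<exists>c. b = c + c" by blast
  next
    assume "\<exists>c. b = c + c" then obtain c where "b = c + c" by blast
    with assms have "a = (c + d) + (c + d)" by (simp add: algebra_simps)
    then show "\<exists>c. a = c + c" by blast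
  qed
  have 2: "(\<lambda>h. \<exists>c. a - h = c + c) = (\<lambda>h. \<exists>c. b - h = c + c)"
  proof (rule ext, rule iffI)
    fix h assume "\<exists>c. a - h = c + c" then obtain c where "a - h = c + c" by blast
    with assms have "b - h = (c - d) + (c - d)" by (simp add: algebra_simps)
    then show "\<exists>c. b - h = c + c" by blast
  next
    fix h assume "\<exists>c. b - h = c + c" then obtain c where "b - h = c + c" by blast
    with assms have "a - h = (c + d) + (c + d)" by (simp add: algebra_simps)
    then show "\<exists>c. a - h = c + c" by blast
  qed
  show ?thesis unfolding grep_def 1 2 by simp
qed

lemma grep0: "grep 0 = 0" by (auto simp: grep_def)
lemma ghalf0: "ghalf 0 = 0" by (rule half_unique) (simp add: grep0)

locale VF =
  fixes val :: "'k::field \<Rightarrow> 'g::linordered_ab_group_add"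
    and pi :: "'k \<Rightarrow> 'f::field"
  assumes vf: "valued_field val pi"
begin

lemma vmult: "x \<noteq> 0 \<Longrightarrow> y \<noteq> 0 \<Longrightarrow> val (x * y) = val x + val y"
  using vf by (simp add: valued_field_def valuation_def)
lemma vadd: "x \<noteq> 0 \<Longrightarrow> y \<noteq> 0 \<Longrightarrow> x + y \<noteq> 0 \<Longrightarrow> min (val x) (val y) \<le> val (x + y)"
  using vf by (simp add: valued_field_def valuation_def)
lemma vsurj: "\<exists>x. x \<noteq> 0 \<and> val x = g"
  using vf by (simp add: valued_field_def valuation_def)

lemma pi_add: "x \<in> val_ring val \<Longrightarrow> y \<in> val_ring val \<Longrightarrow> pi (x + y) = pi x + pi y"
  using vf by (simp add: valued_field_def residue_map_def)
lemma pi_mult: "x \<in> val_ring val \<Longrightarrow> y \<in> val_ring val \<Longrightarrow> pi (x * y) = pi x * pi y"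
  using vf by (simp add: valued_field_def residue_map_def)
lemma pi_one: "pi 1 = 1"
  using vf by (simp add: valued_field_def residue_map_def)
lemma pi_surj: "\<exists>x\<in>val_ring val. pi x = c"
proof -
  have "pi ` val_ring val = UNIV" using vf by (simp add: valued_field_def residue_map_def)
  then show ?thesis by (metis UNIV_I imageE)
qed
lemma pi_zero_iff: "x \<in> val_ring val \<Longrightarrow> pi x = 0 \<longleftrightarrow> (x = 0 \<or> 0 < val x)"
  using vf by (simp add: valued_field_def residue_map_def)

lemma ring_iff: "x \<in> val_ring val \<longleftrightarrow> x = 0 \<or> 0 \<le> val x"
  by (simp add: val_ring_def)

lemma pi0: "pi 0 = 0" using pi_zero_iff[of 0] by (simp add: ring_iff)

lemma val_one: "val 1 = 0"
  using vmult[of 1 1] by simp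

lemma val_inv: "x \<noteq> 0 \<Longrightarrow> val (inverse x) = - val x"
  using vmult[of x "inverse x"] val_one by (simp add: eq_neg_iff_add_eq_0 add.commute)

lemma val_div: "x \<noteq> 0 \<Longrightarrow> y \<noteq> 0 \<Longrightarrow> val (x / y) = val x - val y"
  by (simp add: divide_inverse vmult val_inv)

lemma val_sq: "x \<noteq> 0 \<Longrightarrow> val (x\<^sup>2) = val x + val x"
  by (simp add: power2_eq_square vmult)

lemma unit_ring: "val u = 0 \<Longrightarrow> u \<in> val_ring val" by (simp add: ring_iff)

lemma unit_pi_nz: "u \<noteq> 0 \<Longrightarrow> val u = 0 \<Longrightarrow> pi u \<noteq> 0"
  using pi_zero_iff[of u] by (simp add: ring_iff)

lemma lift: "c \<noteq> 0 \<Longrightarrow> \<exists>b. b \<noteq> 0 \<and> val b = 0 \<and> pi b = c"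
proof -
  assume c: "c \<noteq> 0"
  obtain b where b: "b \<in> val_ring val" "pi b = c" using pi_surj by blast
  with c have "b \<noteq> 0" using pi0 by auto
  moreover with b c pi_zero_iff[of b] have "val b = 0" by (auto simp: ring_iff)
  ultimately show ?thesis using b by blast
qed

lemma pi_inv: "u \<noteq> 0 \<Longrightarrow> val u = 0 \<Longrightarrow> pi (inverse u) = inverse (pi u)"
proof -
  assume u: "u \<noteq> 0" "val u = 0"
  then have "val (inverse u) = 0" by (simp add: val_inv)
  then have "pi (u * inverse u) = pi u * pi (inverse u)"
    using u by (intro pi_mult) (auto simp: ring_iff)
  with u pi_one have "pi u * pi (inverse u) = 1" by simp
  then show ?thesis by (metis inverse_unique)
qed

lemma unit_mult: "val a = 0 \<Longrightarrow> val b = 0 \<Longrightarrow> pi (a * b) = pi a * pi b"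
  by (intro pi_mult) (auto simp: ring_iff)

definition sel :: "'g \<Rightarrow> 'k" where
  "sel g = (if g = 0 then 1 else SOME x. x \<noteq> 0 \<and> val x = g)"

lemma sel_prop: "sel g \<noteq> 0 \<and> val (sel g) = g"
proof (cases "g = 0")
  case True then show ?thesis by (simp add: sel_def val_one)
next
  case False
  have "(SOME x. x \<noteq> 0 \<and> val x = g) \<noteq> 0 \<and> val (SOME x. x \<noteq> 0 \<and> val x = g) = g"
    using vsurj[of g] by (rule someI_ex)
  with False show ?thesis by (simp add: sel_def)
qed

lemma sel_nz: "sel g \<noteq> 0" using sel_prop by blast
lemma val_sel: "val (sel g) = g" using sel_prop by blast

definition rr :: "'g \<Rightarrow> 'k" where
  "rr g = sel (grep g) * (sel (ghalf g))\<^sup>2"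

lemma rr_nz: "rr g \<noteq> 0" by (simp add: rr_def sel_nz)

lemma val_rr: "val (rr g) = g"
proof -
  have "val (rr g) = grep g + (ghalf g + ghalf g)"
    by (simp add: rr_def vmult sel_nz val_sq val_sel)
  also have "\<dots> = g" using half_eq[of g] by (simp add: algebra_simps)
  finally show ?thesis .
qed

lemma rr0: "rr 0 = 1" by (simp add: rr_def grep0 ghalf0 sel_def)

definition pan :: "'k \<Rightarrow> 'f" where
  "pan x = pi (x / rr (val x))"

lemma quot_unit: "x \<noteq> 0 \<Longrightarrow> x / rr (val x) \<noteq> 0 \<and> val (x / rr (val x)) = 0"
  by (simp add: rr_nz val_div val_rr)

lemma pan_nz: "x \<noteq> 0 \<Longrightarrow> pan x \<noteq> 0"
  unfolding pan_def using quot_unit unit_pi_nz by blast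

lemma P1: "val_unit val u \<Longrightarrow> pan u = pi u"
  by (simp add: val_unit_def pan_def rr0)

lemma P2: "val_unit val u \<Longrightarrow> x \<noteq> 0 \<Longrightarrow> pan (u * x) = pi u * pan x"
proof -
  assume u: "val_unit val u" and x: "x \<noteq> 0"
  then have u': "u \<noteq> 0" "val u = 0" by (auto simp: val_unit_def)
  then have v: "val (u * x) = val x" using x by (simp add: vmult)
  have "u * x / rr (val x) = u * (x / rr (val x))" by simp
  then have "pan (u * x) = pi (u * (x / rr (val x)))" by (simp add: pan_def v)
  also have "\<dots> = pi u * pan x" unfolding pan_def
    by (rule unit_mult) (use u' quot_unit[OF x] in auto)
  finally show ?thesis .
qed

lemma P3: "c \<noteq> 0 \<Longrightarrow> \<exists>w. w \<noteq> 0 \<and> val w = g \<and> pan w = c"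
proof -
  assume c: "c \<noteq> 0"
  obtain b where b: "b \<noteq> 0" "val b = 0" "pi b = c" using lift[OF c] by blast
  have v: "val (b * rr g) = g" using b by (simp add: vmult rr_nz val_rr)
  have "pan (b * rr g) = c" unfolding pan_def v using b rr_nz[of g] by simp
  moreover have "b * rr g \<noteq> 0" using b rr_nz by simp
  ultimately show ?thesis using v by blast
qed

lemma strict_one:
  assumes z: "z \<noteq> 0" "0 < val z" "1 + z \<noteq> 0"
  shows "val (1 + z) = 0 \<and> pi (1 + z) = 1"
proof -
  have "min (val 1) (val z) \<le> val (1 + z)" using vadd[of 1 z] z by simp
  then have ge: "0 \<le> val (1 + z)" using z val_one by simp
  have pz: "pi z = 0" using pi_zero_iff[of z] z by (simp add: ring_iff)
  have "pi (1 + z) = pi 1 + pi z" by (rule pi_add) (use z val_one in \<open>auto simp: ring_iff\<close>)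
  then have p1: "pi (1 + z) = 1" using pz pi_one by simp
  then have "\<not> 0 < val (1 + z)" using pi_zero_iff[of "1 + z"] ge by (simp add: ring_iff)
  with ge p1 show ?thesis by simp
qed

lemma P4a:
  assumes x: "x1 \<noteq> 0" "x2 \<noteq> 0" "x1 + x2 \<noteq> 0" and lt: "val x1 < val x2"
  shows "pan (x1 + x2) = pan x1"
proof -
  define z where "z = x2 / x1"
  have z0: "z \<noteq> 0" using x by (simp add: z_def)
  have zv: "0 < val z" using x lt by (simp add: z_def val_div)
  have eq: "x1 + x2 = x1 * (1 + z)" using x by (simp add: z_def field_simps)
  have z1: "1 + z \<noteq> 0" using x eq by auto
  have so: "val (1 + z) = 0 \<and> pi (1 + z) = 1" using strict_one z0 zv z1 by blast
  have v: "val (x1 + x2) = val x1" using eq so x z1 by (simp add: vmult)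
  have "(x1 + x2) / rr (val x1) = (x1 / rr (val x1)) * (1 + z)" unfolding eq by (simp add: divide_inverse mult_ac)
  then have "pan (x1 + x2) = pi ((x1 / rr (val x1)) * (1 + z))" unfolding pan_def v by (rule arg_cong)
  also have "\<dots> = pan x1 * pi (1 + z)" unfolding pan_def
    by (rule unit_mult) (use quot_unit[OF x(1)] so in auto)
  finally show ?thesis using so by simp
qed

lemma P4b:
  assumes x: "x1 \<noteq> 0" "x2 \<noteq> 0" "x1 + x2 \<noteq> 0" and eqv: "val x1 = val x2"
    and nz: "pan x1 + pan x2 \<noteq> 0"
  shows "val (x1 + x2) = val x1 \<and> pan (x1 + x2) = pan x1 + pan x2"
proof -
  define R where "R = rr (val x1)"
  have R: "R \<noteq> 0" "val R = val x1" by (simp_all add: R_def rr_nz val_rr)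
  define e1 where "e1 = x1 / R"
  define e2 where "e2 = x2 / R"
  have e1: "e1 \<noteq> 0" "val e1 = 0" using x R by (simp_all add: e1_def val_div)
  have e2: "e2 \<noteq> 0" "val e2 = 0" using x R eqv by (simp_all add: e2_def val_div)
  have s: "(x1 + x2) / R = e1 + e2" by (simp add: e1_def e2_def add_divide_distrib)
  have s0: "e1 + e2 \<noteq> 0" using s x R by (metis divide_eq_0_iff)
  have "min (val e1) (val e2) \<le> val (e1 + e2)" using vadd e1 e2 s0 by blast
  then have sge: "0 \<le> val (e1 + e2)" using e1 e2 by simp
  have pe1: "pi e1 = pan x1" by (simp add: pan_def e1_def R_def)
  have pe2: "pi e2 = pan x2" by (simp add: pan_def e2_def R_def eqv)
  have ps: "pi (e1 + e2) = pan x1 + pan x2"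
    using pi_add[of e1 e2] e1 e2 pe1 pe2 by (simp add: ring_iff)
  then have "\<not> 0 < val (e1 + e2)" using pi_zero_iff[of "e1 + e2"] sge nz by (simp add: ring_iff)
  with sge have sv: "val (e1 + e2) = 0" by simp
  have "x1 + x2 = (e1 + e2) * R" using s R by (simp add: field_simps)
  then have v: "val (x1 + x2) = val x1" using s0 R sv by (simp add: vmult)
  have "pan (x1 + x2) = pi ((x1 + x2) / R)" by (simp add: pan_def v R_def)
  then show ?thesis using v s ps by simp
qed

lemma rr_split: "rr g = sel (grep g) * (sel (ghalf g))\<^sup>2" by (simp add: rr_def)

lemma P5:
  assumes sq: "\<forall>u. strict_unit val pi u \<longrightarrow> (\<exists>y. y\<^sup>2 = u)"
    and x: "x \<noteq> 0" "y \<noteq> 0" and d: "val x - val y = g + g" and pe: "pan x = pan y"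
  shows "\<exists>u. u \<noteq> 0 \<and> y = u\<^sup>2 * x"
proof -
  have t: "grep (val x) = grep (val y)" using grep_cong d by blast
  define T where "T = sel (grep (val x))"
  define hx where "hx = sel (ghalf (val x))"
  define hy where "hy = sel (ghalf (val y))"
  have rx: "rr (val x) = T * hx\<^sup>2" by (simp add: rr_def T_def hx_def)
  have ry: "rr (val y) = T * hy\<^sup>2" by (simp add: rr_def T_def hy_def t)
  have nz: "T \<noteq> 0" "hx \<noteq> 0" "hy \<noteq> 0" by (simp_all add: T_def hx_def hy_def sel_nz)
  define ex where "ex = x / rr (val x)"
  define ey where "ey = y / rr (val y)"
  have ex: "ex \<noteq> 0" "val ex = 0" using quot_unit[OF x(1)] by (simp_all add: ex_def)
  have ey: "ey \<noteq> 0" "val ey = 0" using quot_unit[OF x(2)] by (simp_all add: ey_def)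
  have pex: "pi ex = pi ey" using pe by (simp add: pan_def ex_def ey_def)
  define q where "q = ey * inverse ex"
  have q: "q \<noteq> 0" "val q = 0" using ex ey by (simp_all add: q_def vmult val_inv)
  have "pi q = pi ey * inverse (pi ex)" using ex ey
    by (simp add: q_def unit_mult val_inv pi_inv)
  then have "pi q = 1" using pex unit_pi_nz[OF ex] by simp
  then have "strict_unit val pi q" using q by (simp add: strict_unit_def val_unit_def)
  then obtain w where w: "w\<^sup>2 = q" using sq by blast
  have w0: "w \<noteq> 0" using w q by auto
  have xe: "x = ex * (T * hx\<^sup>2)" using rx rr_nz[of "val x"] by (simp add: ex_def)
  have ye: "y = ey * (T * hy\<^sup>2)" using ry rr_nz[of "val y"] by (simp add: ey_def)
  have eyq: "ey = w\<^sup>2 * ex" using w ex by (simp add: q_def)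
  have "y = (w * hy / hx)\<^sup>2 * x"
    unfolding ye xe eyq using nz by (simp add: field_simps power2_eq_square)
  moreover have "w * hy / hx \<noteq> 0" using w0 nz by simp
  ultimately show ?thesis by blast
qed

lemma P6:
  assumes a: "a \<noteq> 0" "u \<noteq> 0"
  shows "\<exists>k. k \<noteq> 0 \<and> pan (a * u\<^sup>2) = pan a * k\<^sup>2"
proof -
  define v where "v = val a"
  have vv: "val (a * u\<^sup>2) = v + (val u + val u)" using a by (simp add: v_def vmult val_sq)
  have t: "grep (v + (val u + val u)) = grep v" by (rule grep_cong[of _ _ "val u"]) simp
  have h: "ghalf (v + (val u + val u)) = ghalf v + val u"
    by (rule half_unique) (use half_eq[of v] t in \<open>simp add: algebra_simps\<close>)
  define T where "T = sel (grep v)"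
  define s1 where "s1 = sel (ghalf v)"
  define s2 where "s2 = sel (ghalf v + val u)"
  have r1: "rr v = T * s1\<^sup>2" by (simp add: rr_def T_def s1_def)
  have r2: "rr (val (a * u\<^sup>2)) = T * s2\<^sup>2" by (simp add: rr_def T_def s2_def vv t h)
  have nz: "T \<noteq> 0" "s1 \<noteq> 0" "s2 \<noteq> 0" by (simp_all add: T_def s1_def s2_def sel_nz)
  define k0 where "k0 = u * s1 / s2"
  have k0: "k0 \<noteq> 0" "val k0 = 0" using a nz
    by (simp_all add: k0_def val_div vmult s1_def s2_def val_sel)
  define e where "e = a / rr v"
  have e: "e \<noteq> 0" "val e = 0" using quot_unit[OF a(1)] by (simp_all add: e_def v_def)
  have "a * u\<^sup>2 / rr (val (a * u\<^sup>2)) = e * (k0 * k0)"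
    unfolding r2 e_def r1 k0_def using nz a by (simp add: field_simps power2_eq_square)
  moreover have "val (k0 * k0) = 0" using k0 by (simp add: vmult)
  ultimately have "pan (a * u\<^sup>2) = pi e * (pi k0 * pi k0)"
    unfolding pan_def using e k0 by (simp add: unit_mult)
  moreover have "pi e = pan a" by (simp add: pan_def e_def v_def)
  ultimately have "pan (a * u\<^sup>2) = pan a * (pi k0)\<^sup>2" by (simp add: power2_eq_square)
  moreover have "pi k0 \<noteq> 0" using unit_pi_nz k0 by blast
  ultimately show ?thesis by blast
qed

lemma pan_ok:
  assumes sq: "\<forall>u. strict_unit val pi u \<longrightarrow> (\<exists>y. y\<^sup>2 = u)"
  shows "pseudo_angular_component val pi pan"
  unfolding pseudo_angular_component_def
proof (intro conjI allI impI)
  show "\<And>x. x \<noteq> 0 \<Longrightarrow> pan x \<noteq> 0" by (rule pan_nz)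
  show "\<And>u. val_unit val u \<Longrightarrow> pan u = pi u" by (rule P1)
  show "\<And>u x. val_unit val u \<and> x \<noteq> 0 \<Longrightarrow> pan (u * x) = pi u * pan x" using P2 by blast
  show "\<And>g c. c \<noteq> 0 \<Longrightarrow> \<exists>w. w \<noteq> 0 \<and> val w = g \<and> pan w = c" by (rule P3)
  show "\<And>x1 x2. x1 \<noteq> 0 \<and> x2 \<noteq> 0 \<and> x1 + x2 \<noteq> 0 \<Longrightarrow> val x1 < val x2 \<Longrightarrow> pan (x1 + x2) = pan x1"
    using P4a by blast
  show "\<And>x1 x2. x1 \<noteq> 0 \<and> x2 \<noteq> 0 \<and> x1 + x2 \<noteq> 0 \<Longrightarrow> val x1 = val x2 \<and> pan x1 + pan x2 \<noteq> 0 \<Longrightarrow> val (x1 + x2) = val x1"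
    using P4b by blast
  show "\<And>x1 x2. x1 \<noteq> 0 \<and> x2 \<noteq> 0 \<and> x1 + x2 \<noteq> 0 \<Longrightarrow> val x1 = val x2 \<and> pan x1 + pan x2 \<noteq> 0 \<Longrightarrow> pan (x1 + x2) = pan x1 + pan x2"
    using P4b by blast
  show "\<And>x y. x \<noteq> 0 \<and> y \<noteq> 0 \<and> (\<exists>g. val x - val y = g + g) \<and> pan x = pan y \<Longrightarrow> \<exists>u. u \<noteq> 0 \<and> y = u\<^sup>2 * x"
    using P5[OF sq] by blast
  show "\<And>a u. a \<noteq> 0 \<and> u \<noteq> 0 \<Longrightarrow> \<exists>k. k \<noteq> 0 \<and> pan (a * u\<^sup>2) = pan a * k\<^sup>2"
    using P6 by blast
qed

end

theorem mainTheorem1: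
  fixes val :: "'k::field \<Rightarrow> 'g::linordered_ab_group_add"
    and pi :: "'k \<Rightarrow> 'f::field"
  assumes "valued_field val pi"
    and "\<forall>u. strict_unit val pi u \<longrightarrow> (\<exists>y. y\<^sup>2 = u)"
  shows "\<exists>p :: 'k \<Rightarrow> 'f. pseudo_angular_component val pi p"
proof -
  interpret VF val pi by (rule VF.intro) (rule assms(1))
  show ?thesis using pan_ok[OF assms(2)] by blast
qed

end
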